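(* Suppose $H$ is an $\alpha$-Erdős–Simonovits good graph for some $0\leq \alpha<1$, and let $H^*$ be formed by taking $s$ copies of $H$ and gluing them along an edge $f$ of $H$. Then there is a constant $C$ such that for all $n$, $$\mathrm{ex}(n, H) \leq \mathrm{ex}(n, H^* ) \leq C n^{1 + \alpha}.$$
   Context: A graph $H$ is $(\alpha, C, \beta)$-Erdős–Simonovits good if every $n$-vertex graph $G$ with $pn^2\geq Cn^{1 + \alpha}$ edges contains at least $\beta p^{\mathrm{e}(H)}n^{v(H)}$ copies of $H$; it is $\alpha$-Erdős–Simonovits good if this holds for some positive constants $C,\beta$. Gluing $s$ copies of $H$ along the edge $f$ means taking $s$ copies of $H$ that are pairwise vertex-disjoint except that the copies of the (labeled) edge $f$ are identified into a single edge, endpoint to corresponding endpoint. $\mathrm{ex}(n,H)$ is the Turán number. *)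

theory Defs
  imports "HOL-Analysis.Analysis" "HOL-Library.FuncSet"
begin

definition graph :: "'a set \<Rightarrow> 'a set set \<Rightarrow> bool" where
  "graph V E \<longleftrightarrow> finite V \<and> (\<forall>e\<in>E. \<exists>u v. u \<noteq> v \<and> u \<in> V \<and> v \<in> V \<and> e = {u, v})"

definition copies :: "'a set \<Rightarrow> 'a set set \<Rightarrow> nat \<Rightarrow> nat set set \<Rightarrow> nat" where
  "copies V E n EG = card {\<phi> \<in> V \<rightarrow>\<^sub>E {0..<n}. inj_on \<phi> V \<and> (\<forall>e\<in>E. \<phi> ` e \<in> EG)}"

definition free :: "'a set \<Rightarrow> 'a set set \<Rightarrow> nat \<Rightarrow> nat set set \<Rightarrow> bool" where
  "free V E n EG \<longleftrightarrow> \<not> (\<exists>\<phi>. inj_on \<phi> V \<and> \<phi> ` V \<subseteq> {0..<n} \<and> (\<forall>e\<in>E. \<phi> ` e \<in> EG))"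

definition ex :: "nat \<Rightarrow> 'a set \<Rightarrow> 'a set set \<Rightarrow> nat" where
  "ex n V E = Max {card EG | EG. graph {0..<n} EG \<and> free V E n EG}"

definition ES_good_const :: "real \<Rightarrow> real \<Rightarrow> real \<Rightarrow> 'a set \<Rightarrow> 'a set set \<Rightarrow> bool" where
  "ES_good_const \<alpha> C \<beta> V E \<longleftrightarrow>
     (\<forall>n EG. graph {0..<n} EG \<longrightarrow> real (card EG) \<ge> C * real n powr (1 + \<alpha>) \<longrightarrow>
        real (copies V E n EG) \<ge> \<beta> * (real (card EG) / real n ^ 2) ^ card E * real n ^ card V)"

definition ES_good :: "real \<Rightarrow> 'a set \<Rightarrow> 'a set set \<Rightarrow> bool" where
  "ES_good \<alpha> V E \<longleftrightarrow> (\<exists>C \<beta>. C > 0 \<and> \<beta> > 0 \<and> ES_good_const \<alpha> C \<beta> V E)"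

text \<open>Gluing s copies of H along the edge f: copy i of vertex v is (v,i),
  except that the endpoints of f are identified with their copies in copy 0.\<close>
definition gmap :: "'a set \<Rightarrow> nat \<Rightarrow> 'a \<Rightarrow> 'a \<times> nat" where
  "gmap f i v = (if v \<in> f then (v, 0) else (v, i))"

definition glueV :: "'a set \<Rightarrow> 'a set \<Rightarrow> nat \<Rightarrow> ('a \<times> nat) set" where
  "glueV V f s = {gmap f i v | v i. v \<in> V \<and> i < s}"

definition glueE :: "'a set set \<Rightarrow> 'a set \<Rightarrow> nat \<Rightarrow> ('a \<times> nat) set set" where
  "glueE E f s = {gmap f i ` e | e i. e \<in> E \<and> i < s}"

end

theory Submission
  imports Defs
begin

definition cs :: "'a set \<Rightarrow> 'a set set \<Rightarrow> nat \<Rightarrow> nat set set \<Rightarrow> ('a \<Rightarrow> nat) set" where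
  "cs V E n EG = {\<phi> \<in> V \<rightarrow>\<^sub>E {0..<n}. inj_on \<phi> V \<and> (\<forall>e\<in>E. \<phi> ` e \<in> EG)}"

lemma graphD:
  assumes "graph V E" "e \<in> E"
  shows "\<exists>u v. u \<noteq> v \<and> u \<in> V \<and> v \<in> V \<and> e = {u, v}"
proof -
  have "\<forall>e\<in>E. \<exists>u v. u \<noteq> v \<and> u \<in> V \<and> v \<in> V \<and> e = {u, v}"
    using assms(1) unfolding graph_def by (rule conjunct2)
  then show ?thesis using assms(2) by (rule bspec)
qed

lemma graph_fin: "graph V E \<Longrightarrow> finite V"
  unfolding graph_def by (rule conjunct1)

lemma graph_sub:
  assumes "graph V E" "E' \<subseteq> E"
  shows "graph V E'"
  unfolding graph_def
proof (intro conjI ballI)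
  show "finite V" using graph_fin[OF assms(1)] .
  fix e assume "e \<in> E'"
  then show "\<exists>u v. u \<noteq> v \<and> u \<in> V \<and> v \<in> V \<and> e = {u, v}" using graphD[OF assms(1)] assms(2) by blast
qed

lemma gmap_psi:
  assumes agree: "\<forall>i<s. \<forall>v\<in>f. F i v = F 0 v"
    and "i < s"
  shows "(\<lambda>p. F (snd p) (fst p)) (gmap f i v) = F i v"
proof (cases "v \<in> f")
  case True
  then have "F i v = F 0 v" using assms by blast
  then show ?thesis using True unfolding gmap_def by simp
next
  case False
  then show ?thesis unfolding gmap_def by simp
qed

lemma family_to_glue:
  assumes F: "\<forall>i<s. F i \<in> cs V E n EG"
    and agree: "\<forall>i<s. \<forall>v\<in>f. F i v = F 0 v"
    and disj: "\<forall>i<s. \<forall>j<s. i \<noteq> j \<longrightarrow> F i ` (V - f) \<inter> F j ` (V - f) = {}"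
    and fV: "f \<subseteq> V" and eV: "\<forall>e\<in>E. e \<subseteq> V"
  shows "\<not> free (glueV V f s) (glueE E f s) n EG"
proof -
  define \<psi> where "\<psi> = (\<lambda>p. F (snd p) (fst p))"
  have pg: "\<psi> (gmap f i v) = F i v" if "i < s" for i v
    using gmap_psi[OF agree that] unfolding \<psi>_def by simp
  have inj: "inj_on \<psi> (glueV V f s)"
  proof (rule inj_onI)
    fix p q assume p: "p \<in> glueV V f s" and q: "q \<in> glueV V f s" and eq: "\<psi> p = \<psi> q"
    from p obtain v i where pv: "p = gmap f i v" "v \<in> V" "i < s" unfolding glueV_def by auto
    from q obtain w j where qw: "q = gmap f j w" "w \<in> V" "j < s" unfolding glueV_def by auto
    have Fe: "F i v = F j w" using eq pv qw pg by simp
    have injF: "inj_on (F k) V" if "k < s" for k using F that unfolding cs_def by auto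
    show "p = q"
    proof (cases "i = j")
      case True
      then have "v = w" using Fe injF[OF pv(3)] pv qw by (auto dest: inj_onD)
      then show ?thesis using True pv qw by simp
    next
      case False
      show ?thesis
      proof (cases "v \<in> f")
        case True
        then have "F j v = F j w" using Fe agree pv qw by metis
        then have "v = w" using injF[OF qw(3)] pv qw by (auto dest: inj_onD)
        then show ?thesis using True pv qw by (simp add: gmap_def)
      next
        case vf: False
        show ?thesis
        proof (cases "w \<in> f")
          case True
          then have "F i v = F i w" using Fe agree pv qw by metis
          then have "v = w" using injF[OF pv(3)] pv qw by (auto dest: inj_onD)
          then show ?thesis using True vf by simp
        next
          case False
          have "F i v \<in> F i ` (V - f)" using pv vf by simp
          moreover have "F i v \<in> F j ` (V - f)" unfolding Fe using qw False by simp
          ultimately have "F i v \<in> F i ` (V - f) \<inter> F j ` (V - f)" by blast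
          then show ?thesis using disj \<open>i \<noteq> j\<close> pv qw by blast
        qed
      qed
    qed
  qed
  have img: "\<psi> ` glueV V f s \<subseteq> {0..<n}"
  proof
    fix y assume "y \<in> \<psi> ` glueV V f s"
    then obtain v i where "y = \<psi> (gmap f i v)" "v \<in> V" "i < s" unfolding glueV_def by auto
    then show "y \<in> {0..<n}" using pg F unfolding cs_def by (auto simp: PiE_def Pi_def)
  qed
  have edges: "\<forall>e\<in>glueE E f s. \<psi> ` e \<in> EG"
  proof
    fix e' assume "e' \<in> glueE E f s"
    then obtain e i where ei: "e' = gmap f i ` e" "e \<in> E" "i < s" unfolding glueE_def by auto
    have "\<psi> ` e' = F i ` e" using ei pg by (auto simp: image_image)
    then show "\<psi> ` e' \<in> EG" using F ei unfolding cs_def by auto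
  qed
  show ?thesis unfolding free_def using inj img edges by blast
qed

lemma hitting:
  assumes fr: "free (glueV V f s) (glueE E f s) n EG"
    and fV: "f \<subseteq> V" and eV: "\<forall>e\<in>E. e \<subseteq> V" and finV: "finite V"
    and fab: "f = {a, b}"
  shows "\<exists>T. finite T \<and> card T \<le> s * card V \<and>
     (\<forall>\<phi>\<in>cs V E n EG. \<phi> a = x \<and> \<phi> b = y \<longrightarrow> \<phi> ` (V - f) \<inter> T \<noteq> {})"
proof -
  define P where "P \<phi> \<longleftrightarrow> \<phi> \<in> cs V E n EG \<and> \<phi> a = x \<and> \<phi> b = y" for \<phi>
  define fam where "fam k F \<longleftrightarrow> (\<forall>i<k. P (F i)) \<and>
      (\<forall>i<k. \<forall>j<k. i \<noteq> j \<longrightarrow> F i ` (V - f) \<inter> F j ` (V - f) = {})" for k and F :: "nat \<Rightarrow> 'a \<Rightarrow> nat"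
  define K where "K = {k. k \<le> s \<and> (\<exists>F. fam k F)}"
  have finK: "finite K" unfolding K_def by auto
  have "0 \<in> K" unfolding K_def fam_def by auto
  define k where "k = Max K"
  have kK: "k \<in> K" unfolding k_def using finK \<open>0 \<in> K\<close> by (intro Max_in) auto
  have kmax: "k' \<le> k" if "k' \<in> K" for k' unfolding k_def using finK that by simp
  from kK obtain F where ks: "k \<le> s" and F: "fam k F" unfolding K_def by auto
  have "k \<noteq> s"
  proof
    assume "k = s"
    have agree: "\<forall>i<s. \<forall>v\<in>f. F i v = F 0 v"
    proof (intro allI impI ballI)
      fix i v assume "i < s" "v \<in> f"
      then have "P (F i)" "P (F 0)" using F \<open>k = s\<close> unfolding fam_def by auto
      then show "F i v = F 0 v" using \<open>v \<in> f\<close> fab unfolding P_def by auto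
    qed
    have "\<not> free (glueV V f s) (glueE E f s) n EG"
      apply (rule family_to_glue[OF _ agree _ fV eV])
      using F \<open>k = s\<close> unfolding fam_def P_def by auto
    then show False using fr by simp
  qed
  define T where "T = (\<Union>i<k. F i ` (V - f))"
  have finT: "finite T" unfolding T_def using finV by auto
  have "card T \<le> (\<Sum>i<k. card (F i ` (V - f)))" unfolding T_def by (rule card_UN_le) simp
  also have "\<dots> \<le> (\<Sum>i<k. card V)"
  proof (rule sum_mono)
    fix i show "card (F i ` (V - f)) \<le> card V"
      using finV by (meson Diff_subset card_image_le card_mono finite_Diff order_trans)
  qed
  also have "\<dots> \<le> s * card V" using ks by simp
  finally have cT: "card T \<le> s * card V" .
  have hit: "\<phi> ` (V - f) \<inter> T \<noteq> {}" if "P \<phi>" for \<phi>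
  proof
    assume dis: "\<phi> ` (V - f) \<inter> T = {}"
    define F' where "F' = F(k := \<phi>)"
    have "fam (Suc k) F'"
      unfolding fam_def
    proof (intro conjI allI impI)
      fix i assume "i < Suc k"
      then show "P (F' i)" using F that unfolding F'_def fam_def by (cases "i = k") auto
    next
      fix i j assume ij: "i < Suc k" "j < Suc k" "i \<noteq> j"
      show "F' i ` (V - f) \<inter> F' j ` (V - f) = {}"
      proof (cases "i = k")
        case True
        then have "j < k" using ij by simp
        then have "F j ` (V - f) \<subseteq> T" unfolding T_def by blast
        then show ?thesis using True ij dis unfolding F'_def by auto
      next
        case False
        then have ik: "i < k" using ij by simp
        show ?thesis
        proof (cases "j = k")
          case True
          have "F i ` (V - f) \<subseteq> T" using ik unfolding T_def by blast
          then show ?thesis using True False dis unfolding F'_def by auto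
        next
          case False
          then show ?thesis using F ik ij \<open>i \<noteq> k\<close> unfolding fam_def F'_def by auto
        qed
      qed
    qed
    then have "Suc k \<in> K" unfolding K_def using ks \<open>k \<noteq> s\<close> by auto
    then show False using kmax by fastforce
  qed
  show ?thesis using finT cT hit unfolding P_def by blast
qed

lemma remap:
  assumes inj: "inj_on \<phi> V" and img: "\<phi> ` V \<subseteq> {0..<n}" and finV: "finite V"
    and WV: "W \<subseteq> V" and finX: "finite X" and cX: "card X + card V \<le> n"
  shows "\<exists>\<phi>'. \<phi>' \<in> V \<rightarrow>\<^sub>E {0..<n} \<and> inj_on \<phi>' V \<and> (\<forall>v\<in>V-W. \<phi>' v = \<phi> v) \<and> (\<forall>v\<in>W. \<phi>' v \<notin> X)"
proof -
  define R where "R = {0..<n} - (X \<union> \<phi> ` (V - W))"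
  have "card (X \<union> \<phi> ` (V - W)) \<le> card X + card (V - W)"
    by (meson card_Un_le card_image_le finV finite_Diff le_trans add_le_mono order_refl)
  also have "card (V - W) = card V - card W" using WV finV by (simp add: card_Diff_subset finite_subset)
  finally have c1: "card (X \<union> \<phi> ` (V - W)) \<le> card X + (card V - card W)" .
  have "card R \<ge> n - card (X \<union> \<phi> ` (V - W))"
    unfolding R_def using diff_card_le_card_Diff[of "X \<union> \<phi> ` (V - W)" "{0..<n}"] finX finV by auto
  moreover have cWV: "card W \<le> card V" by (rule card_mono[OF finV WV])
  ultimately have cR: "card W \<le> card R" using c1 cX by linarith
  have "finite W" using finV WV finite_subset by auto
  then obtain h where h: "h ` W \<subseteq> R" "inj_on h W" using card_le_inj[OF _ _ cR] unfolding R_def by auto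
  define \<phi>' where "\<phi>' = restrict (\<lambda>v. if v \<in> W then h v else \<phi> v) V"
  have "\<forall>v\<in>V. (if v \<in> W then h v else \<phi> v) \<in> {0..<n}"
    using h img unfolding R_def by (auto simp: image_subset_iff)
  then have "\<phi>' \<in> V \<rightarrow>\<^sub>E {0..<n}" unfolding \<phi>'_def by auto
  moreover have "inj_on \<phi>' V"
  proof (rule inj_onI)
    fix u v assume uv: "u \<in> V" "v \<in> V" "\<phi>' u = \<phi>' v"
    show "u = v"
    proof (cases "u \<in> W"; cases "v \<in> W")
      assume "u \<in> W" "v \<in> W" then show ?thesis using uv h unfolding \<phi>'_def by (auto dest: inj_onD)
    next
      assume "u \<in> W" "v \<notin> W" then show ?thesis using uv h unfolding \<phi>'_def R_def by auto
    next
      assume "u \<notin> W" "v \<in> W" then show ?thesis using uv h unfolding \<phi>'_def R_def by force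
    next
      assume "u \<notin> W" "v \<notin> W" then show ?thesis using uv inj unfolding \<phi>'_def by (auto dest: inj_onD)
    qed
  qed
  moreover have "\<forall>v\<in>V-W. \<phi>' v = \<phi> v" unfolding \<phi>'_def by auto
  moreover have "\<forall>v\<in>W. \<phi>' v \<notin> X" unfolding \<phi>'_def using h WV unfolding R_def by auto
  ultimately show ?thesis by blast
qed

lemma count_sets:
  assumes "finite U" "A \<subseteq> U" "B \<subseteq> U" "A \<inter> B = {}"
  shows "card {S \<in> Pow U. A \<subseteq> S \<and> S \<inter> B = {}} = 2 ^ (card U - card A - card B)"
proof -
  have eq: "{S \<in> Pow U. A \<subseteq> S \<and> S \<inter> B = {}} = (\<lambda>X. X \<union> A) ` Pow (U - A - B)"
  proof
    show "{S \<in> Pow U. A \<subseteq> S \<and> S \<inter> B = {}} \<subseteq> (\<lambda>X. X \<union> A) ` Pow (U - A - B)"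
    proof
      fix S assume "S \<in> {S \<in> Pow U. A \<subseteq> S \<and> S \<inter> B = {}}"
      then have "S = (S - A) \<union> A" "S - A \<in> Pow (U - A - B)" by auto
      then show "S \<in> (\<lambda>X. X \<union> A) ` Pow (U - A - B)" by blast
    qed
  qed (use assms in auto)
  have inj: "inj_on (\<lambda>X. X \<union> A) (Pow (U - A - B))"
  proof (rule inj_onI)
    fix X Y assume xy: "X \<in> Pow (U - A - B)" "Y \<in> Pow (U - A - B)" "X \<union> A = Y \<union> A"
    then have "X = (X \<union> A) - A" "Y = (Y \<union> A) - A" by blast+
    then show "X = Y" using xy(3) by simp
  qed
  have fA: "finite A" "finite B" using assms finite_subset by blast+
  have "U - A - B = U - (A \<union> B)" by blast
  then have "card (U - A - B) = card U - card (A \<union> B)"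
    using assms fA by (simp add: card_Diff_subset)
  also have "card (A \<union> B) = card A + card B" using fA assms(4) by (rule card_Un_disjoint)
  finally have "card (U - A - B) = card U - card A - card B" by simp
  then show ?thesis unfolding eq card_image[OF inj] using assms by (simp add: card_Pow)
qed

lemma card_graph_le:
  assumes "graph {0..<n} EG"
  shows "finite EG \<and> card EG \<le> n ^ 2"
proof -
  have sub: "EG \<subseteq> (\<lambda>(u,v). {u,v}) ` ({0..<n} \<times> {0..<n})"
    using assms unfolding graph_def by fastforce
  have "card EG \<le> card ((\<lambda>(u,v). {u,v}) ` ({0..<n} \<times> {0..<n}))"
    by (rule card_mono[OF _ sub]) auto
  also have "\<dots> \<le> card ({0..<n} \<times> {0..<(n::nat)})" by (rule card_image_le) auto
  moreover have "finite EG" by (rule finite_subset[OF sub]) auto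
  ultimately show ?thesis by (auto simp: power2_eq_square)
qed

lemma freeH_bound:
  assumes ES: "ES_good_const \<alpha> C0 \<beta> V E" and b: "\<beta> > 0" and C0: "C0 > 0"
    and fE: "f \<in> E" and n: "n \<ge> 1" and g: "graph {0..<n} EG" and fr: "free V E n EG"
  shows "real (card EG) < C0 * real n powr (1 + \<alpha>)"
proof (rule ccontr)
  assume "\<not> ?thesis"
  then have ge: "real (card EG) \<ge> C0 * real n powr (1 + \<alpha>)" by simp
  have "C0 * real n powr (1 + \<alpha>) > 0" using C0 n by simp
  then have mpos: "real (card EG) > 0" using ge by linarith
  have "real (copies V E n EG) \<ge> \<beta> * (real (card EG) / real n ^ 2) ^ card E * real n ^ card V"
    using ES g ge unfolding ES_good_const_def by blast
  moreover have "\<beta> * (real (card EG) / real n ^ 2) ^ card E * real n ^ card V > 0"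
    using b mpos n by simp
  ultimately have "copies V E n EG \<noteq> 0" by linarith
  then have "{\<phi> \<in> V \<rightarrow>\<^sub>E {0..<n}. inj_on \<phi> V \<and> (\<forall>e\<in>E. \<phi> ` e \<in> EG)} \<noteq> {}"
    unfolding copies_def by (metis card.empty)
  then obtain \<phi> where p: "\<phi> \<in> V \<rightarrow>\<^sub>E {0..<n}" "inj_on \<phi> V" "\<forall>e\<in>E. \<phi> ` e \<in> EG" by blast
  then have "\<phi> ` V \<subseteq> {0..<n}" by (auto simp: PiE_def Pi_def)
  then show False using fr p unfolding free_def by blast
qed

lemma glue_free_bound:
  assumes gV: "graph V E" and fE: "f \<in> E" and fab: "f = {a, b}" and ab: "a \<noteq> b"
    and ES: "ES_good_const \<alpha> C0 \<beta> V E" and bpos: "\<beta> > 0" and C0: "C0 > 0"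
    and g: "graph {0..<n} EG" and fr: "free (glueV V f s) (glueE E f s) n EG"
    and nN: "n \<ge> card V + 4 * s * card V + 2"
  shows "real (card EG) \<le> 2 ^ (4 * s * card V + 2) * C0 * real n powr (1 + \<alpha>)"
proof -
  define t where "t = 4 * s * card V"
  define U where "U = {0..<n}"
  have finV: "finite V" using gV unfolding graph_def by (rule conjunct1)
  have eV: "\<forall>e\<in>E. e \<subseteq> V"
  proof
    fix e assume "e \<in> E"
    then obtain u v where "u \<in> V" "v \<in> V" "e = {u, v}" using graphD[OF gV] by blast
    then show "e \<subseteq> V" by simp
  qed
  have fV: "f \<subseteq> V" using eV fE by blast
  define Q where "Q x y T \<longleftrightarrow> finite T \<and> card T \<le> s * card V \<and>
     (\<forall>\<phi>\<in>cs V E n EG. \<phi> a = x \<and> \<phi> b = y \<longrightarrow> \<phi> ` (V - f) \<inter> T \<noteq> {})" for x y T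
  define Tx where "Tx x y = (SOME T. Q x y T)" for x y
  have Tx0: "Q x y (Tx x y)" for x y
    unfolding Tx_def by (rule someI_ex) (use hitting[OF fr fV eV finV fab] in \<open>simp add: Q_def\<close>)
  have Tx: "finite (Tx x y) \<and> card (Tx x y) \<le> s * card V \<and>
     (\<forall>\<phi>\<in>cs V E n EG. \<phi> a = x \<and> \<phi> b = y \<longrightarrow> \<phi> ` (V - f) \<inter> Tx x y \<noteq> {})" for x y
    using Tx0[of x y] unfolding Q_def .
  define Tg where "Tg g = ((\<Union>x\<in>g. \<Union>y\<in>g. Tx x y) \<inter> U) - g" for g
  have gEG: "finite g \<and> card g = 2 \<and> g \<subseteq> U" if gin: "g \<in> EG" for g
  proof -
    obtain u v where "u \<noteq> v" "u \<in> {0..<n}" "v \<in> {0..<n}" "g = {u, v}"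
      using graphD[OF g gin] by blast
    then show ?thesis unfolding U_def by auto
  qed
  have finTg: "finite (Tg g)" for g unfolding Tg_def U_def by auto
  have cTg: "card (Tg g) \<le> t" if "g \<in> EG" for g
  proof -
    have "card (\<Union>x\<in>g. \<Union>y\<in>g. Tx x y) \<le> (\<Sum>x\<in>g. card (\<Union>y\<in>g. Tx x y))"
      by (rule card_UN_le) (use gEG[OF that] in simp)
    also have "\<dots> \<le> (\<Sum>x\<in>g. (\<Sum>y\<in>g. card (Tx x y)))"
      by (rule sum_mono, rule card_UN_le) (use gEG[OF that] in simp)
    also have "\<dots> \<le> (\<Sum>x\<in>g. (\<Sum>y\<in>g. s * card V))"
      by (intro sum_mono) (use Tx in blast)
    also have "\<dots> = t" using gEG[OF that] unfolding t_def by simp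
    finally have "card (\<Union>x\<in>g. \<Union>y\<in>g. Tx x y) \<le> t" .
    moreover have "finite (\<Union>x\<in>g. \<Union>y\<in>g. Tx x y)" using gEG[OF that] Tx by auto
    ultimately show ?thesis unfolding Tg_def by (meson Diff_subset Int_lower1 card_mono le_trans subset_trans)
  qed
  have TgU: "Tg g \<subseteq> U" "Tg g \<inter> g = {}" for g unfolding Tg_def by auto
  define GS where "GS S = {g \<in> EG. g \<subseteq> S \<and> Tg g \<inter> S = {}}" for S
  have n1: "n \<ge> 1" using nN by simp
  have freeGS: "free V E n (GS S)" for S
  proof (rule ccontr)
    assume "\<not> free V E n (GS S)"
    then obtain \<phi> where inj: "inj_on \<phi> V" and img: "\<phi> ` V \<subseteq> {0..<n}" and ed: "\<forall>e\<in>E. \<phi> ` e \<in> GS S"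
      unfolding free_def by blast
    define gg where "gg = \<phi> ` f"
    have ggS: "gg \<in> GS S" using ed fE unfolding gg_def by blast
    then have ggE: "gg \<in> EG" unfolding GS_def by simp
    define W where "W = V - \<Union>E"
    have "card (Tg gg) + card V \<le> n" using cTg[OF ggE] nN unfolding t_def by simp
    then obtain \<phi>' where p1: "\<phi>' \<in> V \<rightarrow>\<^sub>E {0..<n}" and p2: "inj_on \<phi>' V"
       and p3: "\<forall>v\<in>V-W. \<phi>' v = \<phi> v" and p4: "\<forall>v\<in>W. \<phi>' v \<notin> Tg gg"
      using remap[OF inj img finV _ finTg] unfolding W_def by (metis Diff_subset)
    have eW: "e \<subseteq> V - W" if "e \<in> E" for e using that eV unfolding W_def by blast
    have eq_e: "\<phi>' ` e = \<phi> ` e" if "e \<in> E" for e using eW[OF that] p3 by (auto simp: image_def) (metis subsetD)+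
    have "\<phi>' \<in> cs V E n EG" unfolding cs_def using p1 p2 eq_e ed unfolding GS_def by auto
    moreover have aW: "a \<in> V - W" "b \<in> V - W" using eW[OF fE] fab by auto
    ultimately obtain v where v: "v \<in> V - f" "\<phi>' v \<in> Tx (\<phi> a) (\<phi> b)"
      using Tx[of "\<phi> a" "\<phi> b"] p3 by blast
    have "\<phi> a \<in> gg" "\<phi> b \<in> gg" unfolding gg_def fab by auto
    moreover have "\<phi>' v \<in> U" using p1 v unfolding U_def by (auto simp: PiE_def Pi_def)
    moreover have "\<phi>' v \<notin> gg"
    proof
      assume "\<phi>' v \<in> gg"
      then have "\<phi>' v = \<phi>' a \<or> \<phi>' v = \<phi>' b" unfolding gg_def fab using p3 aW by auto
      then show False using p2 v fV fab by (auto dest: inj_onD)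
    qed
    ultimately have inT: "\<phi>' v \<in> Tg gg" using v unfolding Tg_def by blast
    show False
    proof (cases "v \<in> W")
      case True then show False using p4 inT by blast
    next
      case False
      then obtain e where e: "e \<in> E" "v \<in> e" using v unfolding W_def by blast
      then have "\<phi> v \<in> S" using ed unfolding GS_def by blast
      moreover have "\<phi>' v = \<phi> v" using p3 False v by blast
      moreover have "Tg gg \<inter> S = {}" using ggS unfolding GS_def by simp
      ultimately show False using inT by (metis IntI empty_iff)
    qed
  qed
  have graphGS: "graph {0..<n} (GS S)" for S by (rule graph_sub[OF g]) (auto simp: GS_def)
  have bndS: "real (card (GS S)) \<le> C0 * real n powr (1 + \<alpha>)" for S
    using freeH_bound[OF ES bpos C0 fE n1 graphGS[of S] freeGS[of S]] by simp
  have finEG: "finite EG" using card_graph_le[OF g] by simp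
  have finU: "finite U" unfolding U_def by simp
  have swap: "(\<Sum>S\<in>Pow U. card (GS S)) = (\<Sum>g\<in>EG. card {S \<in> Pow U. g \<subseteq> S \<and> Tg g \<inter> S = {}})"
  proof -
    have "(\<Sum>S\<in>Pow U. card (GS S)) = (\<Sum>S\<in>Pow U. \<Sum>g\<in>EG. if g \<subseteq> S \<and> Tg g \<inter> S = {} then 1 else 0)"
      unfolding GS_def using finEG by (simp add: sum.inter_filter[symmetric])
    also have "\<dots> = (\<Sum>g\<in>EG. \<Sum>S\<in>Pow U. if g \<subseteq> S \<and> Tg g \<inter> S = {} then 1 else 0)"
      by (rule sum.swap)
    also have "\<dots> = (\<Sum>g\<in>EG. card {S \<in> Pow U. g \<subseteq> S \<and> Tg g \<inter> S = {}})"
      using finU by (simp add: sum.inter_filter[symmetric])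
    finally show ?thesis .
  qed
  have each: "2 ^ (n - 2 - t) \<le> card {S \<in> Pow U. g \<subseteq> S \<and> Tg g \<inter> S = {}}" if "g \<in> EG" for g
  proof -
    have "card {S \<in> Pow U. g \<subseteq> S \<and> Tg g \<inter> S = {}} = 2 ^ (card U - card g - card (Tg g))"
    proof -
      have g1: "g \<subseteq> U" using gEG[OF that] by simp
      have g2: "g \<inter> Tg g = {}" using TgU(2)[of g] by blast
      show ?thesis using count_sets[OF finU g1 TgU(1)[of g] g2] by (simp add: Int_commute)
    qed
    moreover have "n - 2 - t \<le> card U - card g - card (Tg g)"
      using gEG[OF that] cTg[OF that] unfolding U_def by simp
    ultimately show ?thesis by (simp add: power_increasing)
  qed
  have "card EG * 2 ^ (n - 2 - t) \<le> (\<Sum>S\<in>Pow U. card (GS S))"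
  proof -
    have "(\<Sum>g\<in>EG. (2::nat) ^ (n - 2 - t)) \<le> (\<Sum>g\<in>EG. card {S \<in> Pow U. g \<subseteq> S \<and> Tg g \<inter> S = {}})"
      by (rule sum_mono) (rule each)
    then show ?thesis unfolding swap sum_constant by simp
  qed
  then have r0: "real (card EG * 2 ^ (n - 2 - t)) \<le> real (\<Sum>S\<in>Pow U. card (GS S))"
    by (rule of_nat_mono)
  have r1: "real (card EG * 2 ^ (n - 2 - t)) = real (card EG) * 2 ^ (n - 2 - t)" by simp
  have r2: "real (\<Sum>S\<in>Pow U. card (GS S)) = (\<Sum>S\<in>Pow U. real (card (GS S)))" by (rule of_nat_sum)
  have "real (card EG) * 2 ^ (n - 2 - t) \<le> (\<Sum>S\<in>Pow U. real (card (GS S)))"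
    using r0 unfolding r1 r2 .
  also have "\<dots> \<le> (\<Sum>S\<in>Pow U. C0 * real n powr (1 + \<alpha>))" by (rule sum_mono) (rule bndS)
  also have "\<dots> = 2 ^ n * (C0 * real n powr (1 + \<alpha>))" using finU by (simp add: card_Pow U_def)
  also have "(2::real) ^ n = 2 ^ (n - 2 - t) * 2 ^ (t + 2)"
  proof -
    have nsplit: "n = (n - 2 - t) + (t + 2)" using nN unfolding t_def by simp
    show ?thesis by (metis nsplit power_add)
  qed
  finally have "real (card EG) * 2 ^ (n - 2 - t) \<le> 2 ^ (n - 2 - t) * (2 ^ (t + 2) * C0 * real n powr (1 + \<alpha>))"
    by (simp add: mult_ac)
  then have "real (card EG) \<le> 2 ^ (t + 2) * C0 * real n powr (1 + \<alpha>)"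
    by (simp add: mult.commute)
  then show ?thesis unfolding t_def by simp
qed

lemma ex_set:
  assumes "E' \<noteq> {}"
  shows "finite {card EG | EG. graph {0..<n} EG \<and> free V' E' n EG}"
    and "0 \<in> {card EG | EG. graph {0..<n} EG \<and> free V' E' n EG}"
proof -
  show "finite {card EG | EG. graph {0..<n} EG \<and> free V' E' n EG}"
    by (rule finite_subset[of _ "{..n^2}"]) (use card_graph_le in auto)
  have "graph {0..<n} {}" unfolding graph_def by simp
  moreover have "free V' E' n {}" unfolding free_def using assms by auto
  ultimately show "0 \<in> {card EG | EG. graph {0..<n} EG \<and> free V' E' n EG}"
    by (metis (mono_tags, lifting) card.empty mem_Collect_eq)
qed

lemma free_glue:
  assumes "free V E n EG" and "s \<ge> 1"
  shows "free (glueV V f s) (glueE E f s) n EG"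
  unfolding free_def
proof
  assume "\<exists>\<psi>. inj_on \<psi> (glueV V f s) \<and> \<psi> ` glueV V f s \<subseteq> {0..<n} \<and> (\<forall>e\<in>glueE E f s. \<psi> ` e \<in> EG)"
  then obtain \<psi> where p: "inj_on \<psi> (glueV V f s)" "\<psi> ` glueV V f s \<subseteq> {0..<n}" "\<forall>e\<in>glueE E f s. \<psi> ` e \<in> EG"
    by blast
  have g0: "gmap f 0 v = (v, 0)" for v by (simp add: gmap_def)
  have inV: "(v, 0) \<in> glueV V f s" if "v \<in> V" for v
    unfolding glueV_def using that assms(2) g0 by (metis (mono_tags, lifting) less_one mem_Collect_eq order_less_le_trans)
  define \<phi> where "\<phi> v = \<psi> (v, 0)" for v
  have "inj_on \<phi> V" unfolding \<phi>_def using p(1) inV by (auto simp: inj_on_def)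
  moreover have "\<phi> ` V \<subseteq> {0..<n}" unfolding \<phi>_def using p(2) inV by auto
  moreover have "\<forall>e\<in>E. \<phi> ` e \<in> EG"
  proof
    fix e assume "e \<in> E"
    moreover have "0 < s" using assms(2) by simp
    ultimately have "gmap f 0 ` e \<in> glueE E f s" unfolding glueE_def by blast
    then have "\<psi> ` (gmap f 0 ` e) \<in> EG" using p(3) by blast
    then show "\<phi> ` e \<in> EG" unfolding \<phi>_def g0 by (simp add: image_image)
  qed
  ultimately show False using assms(1) unfolding free_def by blast
qed

lemma small_n:
  assumes "n < N0" "(0::real) \<le> \<alpha>"
  shows "real n ^ 2 \<le> real N0 * real n powr (1 + \<alpha>)"
proof (cases "n = 0")
  case True then show ?thesis by simp
next
  case False
  then have n1: "real n \<ge> 1" by simp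
  have "real n = real n powr 1" using n1 by simp
  also have "\<dots> \<le> real n powr (1 + \<alpha>)" using n1 assms(2) by (intro powr_mono) auto
  finally have a: "real n \<le> real n powr (1 + \<alpha>)" .
  have "real n ^ 2 = real n * real n" by (simp add: power2_eq_square)
  also have "\<dots> \<le> real N0 * real n" using assms(1) by (intro mult_right_mono) auto
  also have "\<dots> \<le> real N0 * real n powr (1 + \<alpha>)" using a by (intro mult_left_mono) auto
  finally show ?thesis .
qed

theorem corollary1p11:
  fixes V :: "'a set" and E :: "'a set set" and f :: "'a set" and s :: nat and \<alpha> :: real
  assumes "graph V E" and "ES_good \<alpha> V E" and "0 \<le> \<alpha>" and "\<alpha> < 1"
    and "f \<in> E" and "s \<ge> 1"
  shows "\<exists>C::real. \<forall>n. ex n V E \<le> ex n (glueV V f s) (glueE E f s)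
            \<and> real (ex n (glueV V f s) (glueE E f s)) \<le> C * real n powr (1 + \<alpha>)"
proof -
  obtain C0 \<beta> where C0: "C0 > 0" and bpos: "\<beta> > 0" and ES: "ES_good_const \<alpha> C0 \<beta> V E"
    using assms(2) unfolding ES_good_def by blast
  obtain a b where fab: "f = {a, b}" and ab: "a \<noteq> b"
    using graphD[OF assms(1,5)] by blast
  define N0 where "N0 = card V + 4 * s * card V + 2"
  define C where "C = real N0 + 2 ^ (4 * s * card V + 2) * C0"
  have Ene: "E \<noteq> {}" using assms(5) by blast
  have "0 < s" using assms(6) by simp
  then have "gmap f 0 ` f \<in> glueE E f s" unfolding glueE_def using assms(5) by blast
  then have GEne: "glueE E f s \<noteq> {}" by blast
  have "ex n V E \<le> ex n (glueV V f s) (glueE E f s)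
            \<and> real (ex n (glueV V f s) (glueE E f s)) \<le> C * real n powr (1 + \<alpha>)" for n
  proof
    show "ex n V E \<le> ex n (glueV V f s) (glueE E f s)"
      unfolding ex_def
    proof (rule Max_mono)
      show "{card EG |EG. graph {0..<n} EG \<and> free V E n EG}
          \<subseteq> {card EG |EG. graph {0..<n} EG \<and> free (glueV V f s) (glueE E f s) n EG}"
        using free_glue[OF _ assms(6)] by blast
      show "{card EG |EG. graph {0..<n} EG \<and> free V E n EG} \<noteq> {}" using ex_set(2)[OF Ene] by blast
      show "finite {card EG |EG. graph {0..<n} EG \<and> free (glueV V f s) (glueE E f s) n EG}"
        using ex_set(1)[OF GEne] by blast
    qed
  next
    have "ex n (glueV V f s) (glueE E f s) \<in> {card EG |EG. graph {0..<n} EG \<and> free (glueV V f s) (glueE E f s) n EG}"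
      unfolding ex_def
    proof (rule Max_in)
      show "finite {card EG |EG. graph {0..<n} EG \<and> free (glueV V f s) (glueE E f s) n EG}"
        by (rule ex_set(1)[OF GEne])
      show "{card EG |EG. graph {0..<n} EG \<and> free (glueV V f s) (glueE E f s) n EG} \<noteq> {}"
        using ex_set(2)[OF GEne, of n "glueV V f s"] by blast
    qed
    then obtain EG where EG: "ex n (glueV V f s) (glueE E f s) = card EG" "graph {0..<n} EG"
        "free (glueV V f s) (glueE E f s) n EG" by blast
    have npos: "real n powr (1 + \<alpha>) \<ge> 0" by simp
    show "real (ex n (glueV V f s) (glueE E f s)) \<le> C * real n powr (1 + \<alpha>)"
    proof (cases "n \<ge> N0")
      case True
      have "real (card EG) \<le> 2 ^ (4 * s * card V + 2) * C0 * real n powr (1 + \<alpha>)"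
        using glue_free_bound[OF assms(1,5) fab ab ES bpos C0 EG(2,3)] True unfolding N0_def by blast
      also have "\<dots> \<le> C * real n powr (1 + \<alpha>)" unfolding C_def using npos
        by (simp add: distrib_right)
      finally show ?thesis using EG(1) by simp
    next
      case False
      have "real (card EG) \<le> real n ^ 2" using card_graph_le[OF EG(2)] by (metis of_nat_le_iff of_nat_power)
      also have "\<dots> \<le> real N0 * real n powr (1 + \<alpha>)" using small_n[OF _ assms(3)] False by simp
      also have "\<dots> \<le> C * real n powr (1 + \<alpha>)" unfolding C_def using npos C0
        by (intro mult_right_mono) auto
      finally show ?thesis using EG(1) by simp
    qed
  qed
  then show ?thesis by blast
qed

end
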